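(* Let $\boldsymbol{u}^\star\in\mathbb{R}^n\setminus\{\boldsymbol{0}\}$ and $f(\boldsymbol{u})=\frac12\|\boldsymbol{u}\boldsymbol{u}^{\mathrm T}-\boldsymbol{u}^\star{\boldsymbol{u}^\star}^{\mathrm T}\|_1$ on $\mathbb{R}^n$. Then for any spurious stationary point $\boldsymbol{u}$ of $f$, and for $\boldsymbol{w}=\boldsymbol{u}^\star-\boldsymbol{u}$ as well as for $\boldsymbol{w}=-\boldsymbol{u}^\star-\boldsymbol{u}$, $$d^2f(\boldsymbol{u};\boldsymbol{0})(\boldsymbol{w})=-\|\boldsymbol{u}^\star\|_1^2<0.$$
   Context: $\|\cdot\|_1$ is the entrywise $\ell_1$-norm. For $g:\mathbb{R}^n\to\mathbb{R}$ and $\boldsymbol{x},\boldsymbol{v},\boldsymbol{w}\in\mathbb{R}^n$, the second subderivative is $d^2g(\boldsymbol{x};\boldsymbol{v})(\boldsymbol{w})=\liminf_{t\searrow0,\ \boldsymbol{w}'\to\boldsymbol{w}}\frac{g(\boldsymbol{x}+t\boldsymbol{w}')-g(\boldsymbol{x})-t\,\boldsymbol{v}^{\mathrm T}\boldsymbol{w}'}{t^2/2}$. A point $\boldsymbol{u}$ is stationary if $\boldsymbol{0}\in\partial f(\boldsymbol{u})$, where $\partial f(\boldsymbol{u})=\{\boldsymbol{Z}\boldsymbol{u}:\boldsymbol{Z}\text{ symmetric}, \boldsymbol{Z}\in\operatorname{Sign}(\boldsymbol{u}\boldsymbol{u}^{\mathrm T}-\boldsymbol{u}^\star{\boldsymbol{u}^\star}^{\mathrm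 T})\}$ (entrywise set-valued sign, $\operatorname{Sign}(0)=[-1,1]$) is the (Fréchet = limiting = Clarke) subdifferential; it is spurious if additionally $\boldsymbol{u}\notin\{\boldsymbol{u}^\star,-\boldsymbol{u}^\star\}$. *)

theory Defs
  imports "HOL-Analysis.Analysis" "HOL-Library.Extended_Real"
begin

definition vl1 :: "real^'n \<Rightarrow> real" where
  "vl1 x = (\<Sum>i\<in>UNIV. \<bar>x $ i\<bar>)"

definition ml1 :: "real^'n^'n \<Rightarrow> real" where
  "ml1 A = (\<Sum>i\<in>UNIV. \<Sum>j\<in>UNIV. \<bar>A $ i $ j\<bar>)"

definition outer :: "real^'n \<Rightarrow> real^'n \<Rightarrow> real^'n^'n" where
  "outer u v = (\<chi> i j. u $ i * v $ j)"

definition fobj :: "real^'n \<Rightarrow> real^'n \<Rightarrow> real" where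
  "fobj ustar u = ml1 (outer u u - outer ustar ustar) / 2"

definition Sign :: "real \<Rightarrow> real set" where
  "Sign a = (if a = 0 then {-1..1} else {sgn a})"

definition subdiff :: "real^'n \<Rightarrow> real^'n \<Rightarrow> (real^'n) set" where
  "subdiff ustar u = {Z *v u | Z. transpose Z = Z \<and>
      (\<forall>i j. Z $ i $ j \<in> Sign ((outer u u - outer ustar ustar) $ i $ j))}"

definition stationary :: "real^'n \<Rightarrow> real^'n \<Rightarrow> bool" where
  "stationary ustar u \<longleftrightarrow> 0 \<in> subdiff ustar u"

definition spurious_stationary :: "real^'n \<Rightarrow> real^'n \<Rightarrow> bool" where
  "spurious_stationary ustar u \<longleftrightarrow> stationary ustar u \<and> u \<noteq> ustar \<and> u \<noteq> - ustar"

definition second_subderiv ::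
  "(real^'n \<Rightarrow> real) \<Rightarrow> real^'n \<Rightarrow> real^'n \<Rightarrow> real^'n \<Rightarrow> ereal" where
  "second_subderiv g x v w =
     Liminf (at_right 0 \<times>\<^sub>F nhds w)
       (\<lambda>(t, w'). ereal ((g (x + t *\<^sub>R w') - g x - t * (v \<bullet> w')) / (t^2 / 2)))"

end

theory Submission
  imports Defs
begin

lemma sign_prop: "z \<in> Sign a \<Longrightarrow> \<bar>z\<bar> \<le> 1 \<and> z * a = \<bar>a\<bar>"
  by (auto simp: Sign_def sgn_if split: if_splits)

lemma sgnlem:
  fixes m a :: real
  assumes "\<bar>m\<bar> \<le> 1" "m * a = \<bar>a\<bar>"
  shows sgnlem_pos: "a > 0 \<Longrightarrow> m = 1" and sgnlem_neg: "a < 0 \<Longrightarrow> m = -1"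
    and sgnlem_nm1: "m \<noteq> -1 \<Longrightarrow> a \<ge> 0" and sgnlem_n1: "m \<noteq> 1 \<Longrightarrow> a \<le> 0"
    and sgnlem_lt: "\<bar>m\<bar> < 1 \<Longrightarrow> a = 0"
proof -
  show p: "a > 0 \<Longrightarrow> m = 1"
  proof -
    assume "a > 0" hence "(m - 1) * a = 0" using assms by (simp add: algebra_simps)
    thus "m = 1" using \<open>a > 0\<close> by simp
  qed
  show n: "a < 0 \<Longrightarrow> m = -1"
  proof -
    assume "a < 0" hence "(m + 1) * a = 0" using assms by (simp add: algebra_simps)
    thus "m = -1" using \<open>a < 0\<close> by simp
  qed
  show "m \<noteq> -1 \<Longrightarrow> a \<ge> 0" using n by linarith
  show "m \<noteq> 1 \<Longrightarrow> a \<le> 0" using p by linarith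
  show "\<bar>m\<bar> < 1 \<Longrightarrow> a = 0" using p n by force
qed

lemma sign_mono:
  fixes A B \<alpha> \<beta> :: real
  assumes "\<bar>A\<bar> \<le> 1" "A * \<alpha> = \<bar>\<alpha>\<bar>" "\<bar>B\<bar> \<le> 1" "B * \<beta> = \<bar>\<beta>\<bar>"
  shows "(\<alpha> - \<beta>) * (A - B) \<ge> 0"
proof -
  have 1: "A * \<beta> \<le> \<bar>\<beta>\<bar>"
  proof -
    have "\<bar>A * \<beta>\<bar> \<le> 1 * \<bar>\<beta>\<bar>" unfolding abs_mult using assms(1) by (intro mult_right_mono) auto
    thus ?thesis by linarith
  qed
  have 2: "B * \<alpha> \<le> \<bar>\<alpha>\<bar>"
  proof -
    have "\<bar>B * \<alpha>\<bar> \<le> 1 * \<bar>\<alpha>\<bar>" unfolding abs_mult using assms(3) by (intro mult_right_mono) auto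
    thus ?thesis by linarith
  qed
  have "(\<alpha> - \<beta>) * (A - B) = A * \<alpha> + B * \<beta> - A * \<beta> - B * \<alpha>" by (simp add: algebra_simps)
  thus ?thesis using 1 2 assms by linarith
qed

lemma c1pos:
  fixes rk rK rl :: real
  assumes "rk > 0" "rk * rk \<ge> 1" "rK > rk" "rl \<ge> rk"
  shows "rK * rl > 1"
proof -
  have "rk \<ge> 1" proof (rule ccontr)
    assume "\<not> rk \<ge> 1" hence "rk * rk < 1 * 1" using assms(1) by (intro mult_strict_mono) auto
    thus False using assms by simp
  qed
  hence "rK > 1" "rl \<ge> 1" using assms by auto
  hence "rK * rl \<ge> rK * 1" by (intro mult_left_mono) auto
  thus ?thesis using \<open>rK > 1\<close> by linarith
qed

lemma c1neg:
  fixes rk rK rl :: real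
  assumes "rK < 0" "rK * rK \<ge> 1" "rK > rk" "rl \<le> rK"
  shows "rk * rl > 1"
proof -
  have "c1": "(-rK) * (-rK) \<ge> 1" using assms by simp
  show ?thesis using c1pos[of "-rK" "-rk" "-rl"] assms by auto
qed

lemma cm1:
  fixes rk rK rl :: real
  assumes "rk * rk \<le> 1" "rK * rK \<le> 1" "rk \<le> rl" "rl \<le> rK" "rk < rK"
    "rK * rl \<ge> 1" "rk * rl \<ge> 1"
  shows False
proof -
  have a: "\<bar>rk\<bar> \<le> 1" "\<bar>rK\<bar> \<le> 1"
    using assms(1,2) by (metis abs_le_square_iff abs_one power2_eq_square one_power2)+
  have "\<bar>rl\<bar> \<le> 1" using a assms(3,4) by linarith
  have "\<bar>rK * rl\<bar> \<le> 1 * 1" unfolding abs_mult using a \<open>\<bar>rl\<bar> \<le> 1\<close> by (intro mult_mono) auto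
  hence "rK * rl = 1" using assms by linarith
  have "\<bar>rk * rl\<bar> \<le> 1 * 1" unfolding abs_mult using a \<open>\<bar>rl\<bar> \<le> 1\<close> by (intro mult_mono) auto
  hence "rk * rl = 1" using assms by linarith
  have "(rK - rk) * rl = 0" using \<open>rK * rl = 1\<close> \<open>rk * rl = 1\<close> by (simp add: algebra_simps)
  thus False using assms \<open>rk * rl = 1\<close> by auto
qed

lemma cmid:
  fixes rk rK :: real
  assumes "rK * rK = 1" "rk * rK = 1" "rk < rK"
  shows False
proof -
  have "(rK - rk) * rK = 0" using assms by (simp add: algebra_simps)
  thus False using assms by auto
qed

lemma reduced:
  fixes x y :: "'n::finite \<Rightarrow> real" and M :: "'n \<Rightarrow> 'n \<Rightarrow> real"
  assumes x0: "\<And>l. x l \<ge> 0" and xy: "\<And>l. x l = 0 \<Longrightarrow> y l = 0"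
    and Msym: "\<And>k l. M k l = M l k" and Mb: "\<And>k l. \<bar>M k l\<bar> \<le> 1"
    and Ms: "\<And>k l. M k l * (y k * y l - x k * x l) = \<bar>y k * y l - x k * x l\<bar>"
    and My: "\<And>k. (\<Sum>l\<in>UNIV. M k l * y l) = 0"
  shows "(\<Sum>l\<in>UNIV. y l) = 0 \<or> (\<forall>l. y l = x l) \<or> (\<forall>l. y l = - x l)"
proof (cases "\<exists>l. x l > 0 \<and> y l = 0")
  case True
  then obtain l where l: "x l > 0" "y l = 0" by blast
  have "M l j * y j = - y j" for j
  proof (cases "x j > 0")
    case True
    have p: "x l * x j > 0" using l True by simp
    have "M l j * (- (x l * x j)) = x l * x j" using Ms[of l j] l p by simp
    hence "(M l j + 1) * (x l * x j) = 0" by (simp add: algebra_simps)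
    hence "M l j = -1" using l True by auto
    thus ?thesis by simp
  next
    case False then have "x j = 0" using x0[of j] by linarith
    thus ?thesis using xy by simp
  qed
  hence "(\<Sum>j\<in>UNIV. M l j * y j) = - (\<Sum>j\<in>UNIV. y j)" by (simp add: sum_negf)
  thus ?thesis using My[of l] by simp
next
  case False
  hence ynz: "\<And>l. x l > 0 \<Longrightarrow> y l \<noteq> 0" by blast
  show ?thesis
  proof (cases "\<forall>l. x l = 0")
    case True thus ?thesis using xy by auto
  next
    case False
    define A where "A = {l. x l > 0}"
    have finA: "finite A" by simp
    have Ane: "A \<noteq> {}" using False x0 unfolding A_def by (metis empty_Collect_eq less_eq_real_def)
    define \<rho> where "\<rho> l = y l / x l" for l
    have y\<rho>: "y l = \<rho> l * x l" for l
      by (cases "x l = 0") (auto simp: \<rho>_def xy)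
    have notA: "x l = 0" "y l = 0" if "l \<notin> A" for l
      using that x0[of l] xy[of l] unfolding A_def by auto
    have M\<rho>: "M k l * (\<rho> k * \<rho> l - 1) = \<bar>\<rho> k * \<rho> l - 1\<bar>" if "k\<in>A" "l\<in>A" for k l
    proof -
      have p: "x k * x l > 0" using that A_def by auto
      have "y k * y l - x k * x l = (x k * x l) * (\<rho> k * \<rho> l - 1)" by (simp add: y\<rho> algebra_simps)
      hence "M k l * ((x k * x l) * (\<rho> k * \<rho> l - 1)) = (x k * x l) * \<bar>\<rho> k * \<rho> l - 1\<bar>"
        using Ms[of k l] p x0[of k] x0[of l] by (simp add: abs_mult)
      hence "(x k * x l) * (M k l * (\<rho> k * \<rho> l - 1)) = (x k * x l) * \<bar>\<rho> k * \<rho> l - 1\<bar>"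
        by (simp add: algebra_simps)
      thus ?thesis using that A_def by auto
    qed
    have \<rho>nz: "\<rho> l \<noteq> 0" if "l \<in> A" for l using ynz[of l] that y\<rho>[of l] A_def by auto
    obtain k where k: "k \<in> A" "\<And>l. l \<in> A \<Longrightarrow> \<rho> k \<le> \<rho> l"
    proof -
      have "Min (\<rho> ` A) \<in> \<rho> ` A" using finA Ane by simp
      then obtain k where "k \<in> A" "\<rho> k = Min (\<rho> ` A)" by auto
      thus ?thesis using that finA by auto
    qed
    obtain K where K: "K \<in> A" "\<And>l. l \<in> A \<Longrightarrow> \<rho> l \<le> \<rho> K"
    proof -
      have "Max (\<rho> ` A) \<in> \<rho> ` A" using finA Ane by simp
      then obtain K where "K \<in> A" "\<rho> K = Max (\<rho> ` A)" by auto
      thus ?thesis using that finA by auto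
    qed
    have xpos: "x k > 0" using k A_def by auto
    have sumx: "(\<Sum>l\<in>UNIV. x l) > 0"
    proof -
      have "x k \<le> (\<Sum>l\<in>UNIV. x l)" using x0 by (intro member_le_sum) auto
      thus ?thesis using xpos by linarith
    qed
    show ?thesis
    proof (cases "\<rho> k = \<rho> K")
      case True
      have ya: "y l = \<rho> k * x l" for l
      proof (cases "l \<in> A")
        case True
        hence "\<rho> l = \<rho> k" using k K \<open>\<rho> k = \<rho> K\<close> by (metis order_antisym)
        thus ?thesis using y\<rho> by simp
      next
        case False thus ?thesis using notA by simp
      qed
      have "(\<Sum>l\<in>UNIV. M k l * y l) = \<rho> k * (\<Sum>l\<in>UNIV. M k l * x l)"
        by (simp add: ya sum_distrib_left algebra_simps)
      hence S0: "(\<Sum>l\<in>UNIV. M k l * x l) = 0" using My[of k] \<rho>nz[OF k(1)] by simp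
      have kk: "M k l * (\<rho> k * \<rho> k - 1) = \<bar>\<rho> k * \<rho> k - 1\<bar>" if "l \<in> A" for l
        using M\<rho>[OF k(1) that] that k K True by (metis order_antisym)
      consider "\<rho> k * \<rho> k > 1" | "\<rho> k * \<rho> k < 1" | "\<rho> k * \<rho> k = 1" by linarith
      then show ?thesis
      proof cases
        case 1
        have "M k l * x l = x l" for l
        proof (cases "l \<in> A")
          case True thus ?thesis using sgnlem_pos[OF Mb kk[OF True]] 1 by simp
        next
          case False thus ?thesis using notA by simp
        qed
        hence "(\<Sum>l\<in>UNIV. M k l * x l) = (\<Sum>l\<in>UNIV. x l)" by (rule sum.cong[OF refl])
        thus ?thesis using S0 sumx by simp
      next
        case 2
        have "M k l * x l = - x l" for l
        proof (cases "l \<in> A")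
          case True thus ?thesis using sgnlem_neg[OF Mb kk[OF True]] 2 by simp
        next
          case False thus ?thesis using notA by simp
        qed
        hence "(\<Sum>l\<in>UNIV. M k l * x l) = - (\<Sum>l\<in>UNIV. x l)" by (simp add: sum_negf)
        thus ?thesis using S0 sumx by simp
      next
        case 3
        hence "(\<rho> k - 1) * (\<rho> k + 1) = 0" by (simp add: algebra_simps)
        hence "\<rho> k = 1 \<or> \<rho> k = -1" by auto
        thus ?thesis using ya by auto
      qed
    next
      case False
      have lt: "\<rho> k < \<rho> K" using k(2)[OF K(1)] False by simp
      have T: "(\<rho> K - \<rho> k) * (M K l - M k l) * y l \<ge> 0" for l
      proof (cases "l \<in> A")
        case True
        have m: "((\<rho> K * \<rho> l - 1) - (\<rho> k * \<rho> l - 1)) * (M K l - M k l) \<ge> 0"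
          by (rule sign_mono[OF Mb M\<rho>[OF K(1) True] Mb M\<rho>[OF k(1) True]])
        have eq: "(\<rho> K - \<rho> k) * (M K l - M k l) * y l
            = (((\<rho> K * \<rho> l - 1) - (\<rho> k * \<rho> l - 1)) * (M K l - M k l)) * x l"
          by (simp add: y\<rho> algebra_simps)
        have "0 \<le> (((\<rho> K * \<rho> l - 1) - (\<rho> k * \<rho> l - 1)) * (M K l - M k l)) * x l"
          using m x0[of l] by (rule mult_nonneg_nonneg)
        thus ?thesis by (simp only: eq)
      next
        case False thus ?thesis using notA by simp
      qed
      have "(\<Sum>l\<in>UNIV. (\<rho> K - \<rho> k) * (M K l - M k l) * y l)
          = (\<Sum>l\<in>UNIV. (\<rho> K - \<rho> k) * (M K l * y l) - (\<rho> K - \<rho> k) * (M k l * y l))"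
        by (intro sum.cong) (auto simp: algebra_simps)
      also have "\<dots> = (\<rho> K - \<rho> k) * (\<Sum>l\<in>UNIV. M K l * y l) - (\<rho> K - \<rho> k) * (\<Sum>l\<in>UNIV. M k l * y l)"
        by (simp add: sum_subtractf sum_distrib_left)
      also have "\<dots> = 0" using My by simp
      finally have "\<forall>l\<in>UNIV. (\<rho> K - \<rho> k) * (M K l - M k l) * y l = 0"
        using sum_nonneg_eq_0_iff[of UNIV "\<lambda>l. (\<rho> K - \<rho> k) * (M K l - M k l) * y l"] T by simp
      hence eqr: "M K l = M k l" if "l \<in> A" for l
        using lt ynz[of l] that A_def by auto
      have c1: "M K K = M k K" "M K k = M k k" using eqr K(1) k(1) by auto
      have c2: "M k K = M K k" by (rule Msym)
      have mKK: "M K K * (\<rho> K * \<rho> K - 1) = \<bar>\<rho> K * \<rho> K - 1\<bar>" using M\<rho> K(1) by blast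
      have mkk: "M k k * (\<rho> k * \<rho> k - 1) = \<bar>\<rho> k * \<rho> k - 1\<bar>" using M\<rho> k(1) by blast
      have mkK: "M k K * (\<rho> k * \<rho> K - 1) = \<bar>\<rho> k * \<rho> K - 1\<bar>" using M\<rho> k(1) K(1) by blast
      have key: "\<exists>r \<sigma>. (\<sigma> = 1 \<or> \<sigma> = -1) \<and> (\<forall>l\<in>A. M r l = \<sigma>)"
      proof (cases "M K K = 1")
        case True
        hence e: "M k k = 1" "M k K = 1" using c1 c2 by auto
        have h1: "\<rho> K * \<rho> K \<ge> 1" using sgnlem_n1[OF Mb mKK] sgnlem_neg[OF Mb mKK] True by force
        have h2: "\<rho> k * \<rho> k \<ge> 1" using sgnlem_neg[OF Mb mkk] e by force
        have h3: "\<rho> k * \<rho> K \<ge> 1" using sgnlem_neg[OF Mb mkK] e by force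
        show ?thesis
        proof (cases "\<rho> k > 0")
          case True
          have "M K l = 1" if "l \<in> A" for l
          proof -
            have "\<rho> K * \<rho> l > 1" using c1pos[OF True h2 lt k(2)[OF that]] .
            thus ?thesis using sgnlem_pos[OF Mb M\<rho>[OF K(1) that]] by simp
          qed
          thus ?thesis by blast
        next
          case False
          hence "\<rho> k < 0" using \<rho>nz[OF k(1)] by linarith
          have "\<rho> K < 0"
          proof (rule ccontr)
            assume "\<not> \<rho> K < 0"
            hence "\<rho> k * \<rho> K \<le> 0" using \<open>\<rho> k < 0\<close> by (intro mult_nonpos_nonneg) auto
            thus False using h3 by linarith
          qed
          have "M k l = 1" if "l \<in> A" for l
          proof -
            have "\<rho> k * \<rho> l > 1" using c1neg[OF \<open>\<rho> K < 0\<close> h1 lt K(2)[OF that]] .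
            thus ?thesis using sgnlem_pos[OF Mb M\<rho>[OF k(1) that]] by simp
          qed
          thus ?thesis by blast
        qed
      next
        case nK1: False
        show ?thesis
        proof (cases "M K K = -1")
          case True
          hence e: "M k k = -1" "M k K = -1" using c1 c2 by auto
          have h1: "\<rho> K * \<rho> K \<le> 1" using sgnlem_pos[OF Mb mKK] True by force
          have h2: "\<rho> k * \<rho> k \<le> 1" using sgnlem_pos[OF Mb mkk] e by force
          have "M K l = -1" if "l \<in> A" for l
          proof (rule ccontr)
            assume a: "M K l \<noteq> -1"
            have "\<rho> K * \<rho> l - 1 \<ge> 0" using sgnlem_nm1[OF Mb M\<rho>[OF K(1) that] a] .
            moreover have "\<rho> k * \<rho> l - 1 \<ge> 0" using sgnlem_nm1[OF Mb M\<rho>[OF k(1) that]] a eqr[OF that] by simp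
            ultimately show False using cm1[OF h2 h1 k(2)[OF that] K(2)[OF that] lt] by simp
          qed
          thus ?thesis by blast
        next
          case False
          hence lt1: "\<bar>M K K\<bar> < 1" using nK1 Mb[of K K] by (auto simp: abs_if)
          have "\<rho> K * \<rho> K - 1 = 0" using sgnlem_lt[OF Mb mKK lt1] .
          moreover have "\<rho> k * \<rho> K - 1 = 0" using sgnlem_lt[OF Mb mkK] lt1 c1 by simp
          ultimately have False using cmid[of "\<rho> K" "\<rho> k"] lt by simp
          thus ?thesis ..
        qed
      qed
      then obtain r \<sigma> where r: "\<sigma> = 1 \<or> \<sigma> = -1" "\<forall>l\<in>A. M r l = \<sigma>" by blast
      have "M r l * y l = \<sigma> * y l" for l
        by (cases "l \<in> A") (use r notA in auto)
      hence "(\<Sum>l\<in>UNIV. M r l * y l) = (\<Sum>l\<in>UNIV. \<sigma> * y l)" by (rule sum.cong[OF refl])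
      hence "(\<Sum>l\<in>UNIV. M r l * y l) = \<sigma> * (\<Sum>l\<in>UNIV. y l)" by (simp add: sum_distrib_left)
      hence "\<sigma> * (\<Sum>l\<in>UNIV. y l) = 0" using My[of r] by simp
      thus ?thesis using r(1) by auto
    qed
  qed
qed

lemma reduced_bound:
  fixes x y :: "'n::finite \<Rightarrow> real" and M :: "'n \<Rightarrow> 'n \<Rightarrow> real"
  assumes x0: "\<And>l. x l \<ge> 0" and Mb: "\<And>k l. \<bar>M k l\<bar> \<le> 1"
    and Ms: "\<And>k l. M k l * (y k * y l - x k * x l) = \<bar>y k * y l - x k * x l\<bar>"
    and My: "\<And>k. (\<Sum>l\<in>UNIV. M k l * y l) = 0"
    and Sy: "(\<Sum>l\<in>UNIV. y l) = 0"
  shows "\<bar>y l\<bar> \<le> x l"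
proof -
  define g where "g k l = \<bar>y k * y l - x k * x l\<bar> - (x k * x l - y k * y l)" for k l
  have g0: "g k l \<ge> 0" for k l unfolding g_def by linarith
  have a: "(\<Sum>k\<in>UNIV. \<Sum>l\<in>UNIV. \<bar>y k * y l - x k * x l\<bar>)
      = (\<Sum>k\<in>UNIV. y k * (\<Sum>l\<in>UNIV. M k l * y l)) - (\<Sum>k\<in>UNIV. \<Sum>l\<in>UNIV. M k l * (x k * x l))"
  proof -
    have "(\<Sum>k\<in>UNIV. \<Sum>l\<in>UNIV. \<bar>y k * y l - x k * x l\<bar>)
        = (\<Sum>k\<in>UNIV. \<Sum>l\<in>UNIV. y k * (M k l * y l) - M k l * (x k * x l))"
      by (intro sum.cong refl) (simp add: Ms[symmetric] algebra_simps)
    also have "\<dots> = (\<Sum>k\<in>UNIV. y k * (\<Sum>l\<in>UNIV. M k l * y l)) - (\<Sum>k\<in>UNIV. \<Sum>l\<in>UNIV. M k l * (x k * x l))"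
      by (simp add: sum_subtractf sum_distrib_left)
    finally show ?thesis .
  qed
  have b: "(\<Sum>k\<in>UNIV. \<Sum>l\<in>UNIV. M k l * (x k * x l)) \<ge> (\<Sum>k\<in>UNIV. \<Sum>l\<in>UNIV. - (x k * x l))"
  proof (intro sum_mono)
    fix k l
    have p: "x k * x l \<ge> 0" using x0 by simp
    have "\<bar>M k l * (x k * x l)\<bar> = \<bar>M k l\<bar> * (x k * x l)" using p x0[of k] x0[of l] by (simp add: abs_mult)
    also have "\<dots> \<le> 1 * (x k * x l)" using Mb[of k l] p by (intro mult_right_mono) auto
    finally have "\<bar>M k l * (x k * x l)\<bar> \<le> 1 * (x k * x l)" .
    thus "- (x k * x l) \<le> M k l * (x k * x l)" by linarith
  qed
  have c: "(\<Sum>k\<in>UNIV. \<Sum>l\<in>UNIV. x k * x l - y k * y l) = 0 + (\<Sum>k\<in>UNIV. \<Sum>l\<in>UNIV. x k * x l)"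
  proof -
    have "(\<Sum>k\<in>UNIV. \<Sum>l\<in>UNIV. x k * x l - y k * y l)
        = (\<Sum>k\<in>UNIV. \<Sum>l\<in>UNIV. x k * x l) - (\<Sum>k\<in>UNIV. \<Sum>l\<in>UNIV. y k * y l)"
      by (simp add: sum_subtractf)
    also have "(\<Sum>k\<in>UNIV. \<Sum>l\<in>UNIV. y k * y l) = (\<Sum>k\<in>UNIV. y k) * (\<Sum>l\<in>UNIV. y l)"
      by (simp add: sum_product)
    finally show ?thesis using Sy by simp
  qed
  have "(\<Sum>k\<in>UNIV. \<Sum>l\<in>UNIV. g k l)
      = (\<Sum>k\<in>UNIV. \<Sum>l\<in>UNIV. \<bar>y k * y l - x k * x l\<bar>) - (\<Sum>k\<in>UNIV. \<Sum>l\<in>UNIV. x k * x l - y k * y l)"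
    unfolding g_def by (simp add: sum_subtractf)
  also have "\<dots> \<le> 0"
  proof -
    have "(\<Sum>k\<in>UNIV. \<Sum>l\<in>UNIV. - (x k * x l)) = - (\<Sum>k\<in>UNIV. \<Sum>l\<in>UNIV. x k * x l)"
      by (simp add: sum_negf)
    thus ?thesis using a b c My by simp
  qed
  finally have le: "(\<Sum>k\<in>UNIV. \<Sum>l\<in>UNIV. g k l) \<le> 0" .
  have "(\<Sum>k\<in>UNIV. \<Sum>l\<in>UNIV. g k l) \<ge> 0" using g0 by (intro sum_nonneg) auto
  hence "(\<Sum>k\<in>UNIV. \<Sum>l\<in>UNIV. g k l) = 0" using le by linarith
  hence "\<forall>k\<in>UNIV. (\<Sum>l\<in>UNIV. g k l) = 0"
    by (subst (asm) sum_nonneg_eq_0_iff) (auto intro: sum_nonneg g0)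
  hence "(\<Sum>l'\<in>UNIV. g l l') = 0" by simp
  hence "\<forall>l'\<in>UNIV. g l l' = 0" by (subst (asm) sum_nonneg_eq_0_iff) (auto intro: g0)
  hence "g l l = 0" by simp
  hence "\<bar>y l * y l - x l * x l\<bar> = x l * x l - y l * y l" unfolding g_def by simp
  hence "y l * y l \<le> x l * x l" by linarith
  hence "\<bar>y l\<bar> \<le> \<bar>x l\<bar>" by (simp add: abs_le_square_iff power2_eq_square)
  thus ?thesis using x0[of l] by simp
qed

lemma orig:
  fixes s u :: "'n::finite \<Rightarrow> real" and Z :: "'n \<Rightarrow> 'n \<Rightarrow> real"
  assumes Zsym: "\<And>i j. Z i j = Z j i" and Zb: "\<And>i j. \<bar>Z i j\<bar> \<le> 1"
    and Zs: "\<And>i j. Z i j * (u i * u j - s i * s j) = \<bar>u i * u j - s i * s j\<bar>"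
    and Zu: "\<And>i. (\<Sum>j\<in>UNIV. Z i j * u j) = 0"
    and ns1: "\<exists>i. u i \<noteq> s i" and ns2: "\<exists>i. u i \<noteq> - s i"
  shows "(\<Sum>i\<in>UNIV. sgn (s i) * u i) = 0 \<and> (\<forall>i. \<bar>u i\<bar> \<le> \<bar>s i\<bar>)"
proof -
  have stepA: "u i = 0" if "s i = 0" for i
  proof -
    have t: "\<bar>u i * u j - s i * s j\<bar> = u i * (Z i j * u j)" for j
      using Zs[of i j] that by (simp add: algebra_simps)
    have "(\<Sum>j\<in>UNIV. \<bar>u i * u j - s i * s j\<bar>) = (\<Sum>j\<in>UNIV. u i * (Z i j * u j))"
      by (rule sum.cong[OF refl t])
    also have "\<dots> = u i * (\<Sum>j\<in>UNIV. Z i j * u j)" by (simp add: sum_distrib_left)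
    finally have "(\<Sum>j\<in>UNIV. \<bar>u i * u j - s i * s j\<bar>) = u i * (\<Sum>j\<in>UNIV. Z i j * u j)" .
    hence "(\<Sum>j\<in>UNIV. \<bar>u i * u j - s i * s j\<bar>) = 0" using Zu by simp
    hence "\<forall>j\<in>UNIV. \<bar>u i * u j - s i * s j\<bar> = 0" by (subst (asm) sum_nonneg_eq_0_iff) auto
    hence "\<bar>u i * u i - s i * s i\<bar> = 0" by blast
    thus ?thesis using that by simp
  qed
  define x where "x l = \<bar>s l\<bar>" for l
  define y where "y l = sgn (s l) * u l" for l
  define M where "M k l = sgn (s k) * sgn (s l) * Z k l" for k l
  have x0: "\<And>l. x l \<ge> 0" unfolding x_def by simp
  have xy: "\<And>l. x l = 0 \<Longrightarrow> y l = 0" unfolding x_def y_def by simp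
  have Msym: "\<And>k l. M k l = M l k" unfolding M_def using Zsym by simp
  have Mb: "\<And>k l. \<bar>M k l\<bar> \<le> 1"
  proof -
    fix k l
    have "\<bar>M k l\<bar> = \<bar>sgn (s k)\<bar> * \<bar>sgn (s l)\<bar> * \<bar>Z k l\<bar>" unfolding M_def by (simp add: abs_mult)
    also have "\<dots> \<le> 1 * 1 * 1" using Zb[of k l]
      by (intro mult_mono) (auto simp: abs_sgn_eq)
    finally show "\<bar>M k l\<bar> \<le> 1" by simp
  qed
  have Ms: "\<And>k l. M k l * (y k * y l - x k * x l) = \<bar>y k * y l - x k * x l\<bar>"
  proof -
    fix k l
    consider "s k = 0" | "s l = 0" | "s k > 0" "s l > 0" | "s k > 0" "s l < 0" | "s k < 0" "s l > 0"
      | "s k < 0" "s l < 0" by linarith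
    thus "M k l * (y k * y l - x k * x l) = \<bar>y k * y l - x k * x l\<bar>"
    proof cases
      case 1 thus ?thesis unfolding M_def x_def y_def by simp
    next
      case 2 thus ?thesis unfolding M_def x_def y_def by simp
    next
      case 3 thus ?thesis unfolding M_def x_def y_def using Zs[of k l] by simp
    next
      case 4
      have "y k * y l - x k * x l = - (u k * u l - s k * s l)" unfolding x_def y_def using 4 by simp
      moreover have "\<bar>- (u k * u l - s k * s l)\<bar> = \<bar>u k * u l - s k * s l\<bar>" by (rule abs_minus_cancel)
      moreover have "- (Z k l * (s k * s l - u k * u l)) = Z k l * (u k * u l - s k * s l)" by (simp add: algebra_simps)
      ultimately show ?thesis unfolding M_def using 4 Zs[of k l] by simp
    next
      case 5
      have "y k * y l - x k * x l = - (u k * u l - s k * s l)" unfolding x_def y_def using 5 by simp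
      moreover have "\<bar>- (u k * u l - s k * s l)\<bar> = \<bar>u k * u l - s k * s l\<bar>" by (rule abs_minus_cancel)
      moreover have "- (Z k l * (s k * s l - u k * u l)) = Z k l * (u k * u l - s k * s l)" by (simp add: algebra_simps)
      ultimately show ?thesis unfolding M_def using 5 Zs[of k l] by simp
    next
      case 6
      have "y k * y l - x k * x l = (u k * u l - s k * s l)" unfolding x_def y_def using 6 by simp
      thus ?thesis unfolding M_def using 6 Zs[of k l] by simp
    qed
  qed
  have My: "\<And>k. (\<Sum>l\<in>UNIV. M k l * y l) = 0"
  proof -
    fix k
    have "M k l * y l = sgn (s k) * (Z k l * u l)" for l
    proof (cases "s l = 0")
      case True thus ?thesis using stepA unfolding M_def y_def by simp
    next
      case False
      hence "sgn (s l) * sgn (s l) = 1" by (simp add: sgn_if)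
      have "M k l * y l = sgn (s k) * (Z k l * u l) * (sgn (s l) * sgn (s l))"
        unfolding M_def y_def by (simp only: mult_ac)
      thus ?thesis using \<open>sgn (s l) * sgn (s l) = 1\<close> by simp
    qed
    hence "(\<Sum>l\<in>UNIV. M k l * y l) = (\<Sum>l\<in>UNIV. sgn (s k) * (Z k l * u l))" by (rule sum.cong[OF refl])
    also have "\<dots> = 0" using Zu[of k] by (simp add: sum_distrib_left[symmetric])
    finally show "(\<Sum>l\<in>UNIV. M k l * y l) = 0" .
  qed
  have bk: "u l = c * s l" if "\<forall>l. y l = c * x l" "c = 1 \<or> c = -1" for l c
  proof (cases "s l = 0")
    case True thus ?thesis using stepA by simp
  next
    case False
    have "sgn (s l) * u l = c * \<bar>s l\<bar>" using that unfolding y_def x_def by simp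
    thus ?thesis using False that(2) by (cases "s l > 0") (auto simp: sgn_if)
  qed
  have "(\<Sum>l\<in>UNIV. y l) = 0 \<or> (\<forall>l. y l = x l) \<or> (\<forall>l. y l = - x l)"
    by (rule reduced[OF x0 xy Msym Mb Ms My])
  moreover have "\<not> (\<forall>l. y l = x l)"
  proof
    assume "\<forall>l. y l = x l"
    hence "u l = 1 * s l" for l using bk[of 1 l] by simp
    thus False using ns1 by simp
  qed
  moreover have "\<not> (\<forall>l. y l = - x l)"
  proof
    assume "\<forall>l. y l = - x l"
    hence "u l = (-1) * s l" for l using bk[of "-1" l] by simp
    thus False using ns2 by simp
  qed
  ultimately have Sy: "(\<Sum>l\<in>UNIV. y l) = 0" by blast
  have "\<bar>u i\<bar> \<le> \<bar>s i\<bar>" for i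
  proof (cases "s i = 0")
    case True thus ?thesis using stepA by simp
  next
    case False
    have "\<bar>y i\<bar> \<le> x i" by (rule reduced_bound[OF x0 Mb Ms My Sy])
    thus ?thesis using False unfolding x_def y_def by (simp add: abs_mult abs_sgn_eq)
  qed
  thus ?thesis using Sy unfolding y_def by simp
qed

definition lin :: "real^'n \<Rightarrow> real^'n \<Rightarrow> real" where
  "lin s v = (\<Sum>i\<in>UNIV. sgn (s$i) * v$i)"

lemma termPQ1:
  fixes P Q :: real
  shows "\<bar>P\<bar> - sgn P * Q \<le> \<bar>Q - P\<bar>"
proof -
  have "P > 0 \<or> P < 0 \<or> P = 0" by linarith
  thus ?thesis by (elim disjE) (auto simp: abs_if)
qed

lemma termPQ2:
  fixes P Q :: real
  assumes "\<bar>Q\<bar> \<le> \<bar>P\<bar>"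
  shows "\<bar>Q - P\<bar> = \<bar>P\<bar> - sgn P * Q"
proof -
  have "P > 0 \<or> P < 0 \<or> P = 0" by linarith
  thus ?thesis using assms by (elim disjE) (auto simp: abs_if)
qed

lemma termrw:
  fixes a b c d :: real
  shows "\<bar>a\<bar> * \<bar>b\<bar> = \<bar>a * b\<bar>" "(sgn a * c) * (sgn b * d) = sgn (a * b) * (c * d)"
  by (simp_all add: abs_mult sgn_mult mult_ac)

lemma termL1:
  fixes a b c d :: real
  shows "\<bar>a\<bar> * \<bar>b\<bar> - (sgn a * c) * (sgn b * d) \<le> \<bar>c * d - a * b\<bar>"
  unfolding termrw by (rule termPQ1)

lemma termL2:
  fixes a b c d :: real
  assumes "\<bar>c\<bar> \<le> \<bar>a\<bar>" "\<bar>d\<bar> \<le> \<bar>b\<bar>"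
  shows "\<bar>c * d - a * b\<bar> = \<bar>a\<bar> * \<bar>b\<bar> - (sgn a * c) * (sgn b * d)"
proof -
  have p: "\<bar>c * d\<bar> \<le> \<bar>a * b\<bar>" unfolding abs_mult using assms by (intro mult_mono) auto
  show ?thesis unfolding termrw by (rule termPQ2[OF p])
qed

lemma fobj2: "2 * fobj s v = (\<Sum>i\<in>UNIV. \<Sum>j\<in>UNIV. \<bar>v$i * v$j - s$i * s$j\<bar>)"
  by (simp add: fobj_def ml1_def outer_def)

lemma vl1sq: "(vl1 s)^2 = (\<Sum>i\<in>UNIV. \<Sum>j\<in>UNIV. \<bar>s$i\<bar> * \<bar>s$j\<bar>)"
  by (simp add: vl1_def power2_eq_square sum_product)

lemma linsq: "(lin s v)^2 = (\<Sum>i\<in>UNIV. \<Sum>j\<in>UNIV. (sgn (s$i) * v$i) * (sgn (s$j) * v$j))"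
  by (simp add: lin_def power2_eq_square sum_product)

lemma diffsq: "(vl1 s)^2 - (lin s v)^2
    = (\<Sum>i\<in>UNIV. \<Sum>j\<in>UNIV. \<bar>s$i\<bar> * \<bar>s$j\<bar> - (sgn (s$i) * v$i) * (sgn (s$j) * v$j))"
  unfolding vl1sq linsq by (simp add: sum_subtractf)

lemma fobj_lower: "(vl1 s)^2 - (lin s v)^2 \<le> 2 * fobj s v"
  unfolding diffsq fobj2 by (intro sum_mono termL1)

lemma fobj_eq:
  assumes "\<And>i. \<bar>v$i\<bar> \<le> \<bar>s$i\<bar>"
  shows "2 * fobj s v = (vl1 s)^2 - (lin s v)^2"
  unfolding diffsq fobj2 by (intro sum.cong refl termL2 assms)

lemma lin_lin: "lin s (u + t *\<^sub>R w) = lin s u + t * lin s w"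
  by (simp add: lin_def sum.distrib sum_distrib_left algebra_simps)

lemma lin_self: "lin s s = vl1 s"
  unfolding lin_def vl1_def by (intro sum.cong refl) (simp add: sgn_if)

lemma lin_minus: "lin s (a - b) = lin s a - lin s b" "lin s (- a) = - lin s a"
  by (simp_all add: lin_def sum_subtractf sum_negf algebra_simps)

lemma convex_abs:
  fixes a b t :: real
  assumes "\<bar>a\<bar> \<le> \<bar>b\<bar>" "0 \<le> t" "t \<le> 1"
  shows "\<bar>a + t * (b - a)\<bar> \<le> \<bar>b\<bar>" "\<bar>a + t * (- b - a)\<bar> \<le> \<bar>b\<bar>"
proof -
  have 1: "\<bar>(1 - t) * a\<bar> \<le> (1 - t) * \<bar>b\<bar>"
  proof -
    have "\<bar>(1 - t) * a\<bar> = (1 - t) * \<bar>a\<bar>" using assms by (simp add: abs_mult)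
    also have "\<dots> \<le> (1 - t) * \<bar>b\<bar>" using assms by (intro mult_left_mono) auto
    finally show ?thesis .
  qed
  have 2: "\<bar>t * b\<bar> = t * \<bar>b\<bar>" using assms by (simp add: abs_mult)
  have "a + t * (b - a) = (1 - t) * a + t * b" by (simp add: algebra_simps)
  hence "\<bar>a + t * (b - a)\<bar> \<le> \<bar>(1 - t) * a\<bar> + \<bar>t * b\<bar>" by (metis abs_triangle_ineq)
  thus "\<bar>a + t * (b - a)\<bar> \<le> \<bar>b\<bar>" using 1 2 by (simp add: algebra_simps)
  have "a + t * (- b - a) = (1 - t) * a + (- (t * b))" by (simp add: algebra_simps)
  hence "\<bar>a + t * (- b - a)\<bar> \<le> \<bar>(1 - t) * a\<bar> + \<bar>- (t * b)\<bar>" by (metis abs_triangle_ineq)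
  thus "\<bar>a + t * (- b - a)\<bar> \<le> \<bar>b\<bar>" using 1 2 by (simp add: algebra_simps)
qed

lemma d2:
  fixes s u w :: "real^'n"
  assumes F2: "lin s u = 0" and F1: "\<And>i. \<bar>u$i\<bar> \<le> \<bar>s$i\<bar>" and w: "w = s - u \<or> w = - s - u"
  shows "second_subderiv (fobj s) u 0 w = ereal (- ((vl1 s)^2))"
proof -
  define V where "V = vl1 s"
  have fu: "fobj s u = V^2 / 2" using fobj_eq[of u s, OF F1] F2 V_def by simp
  have lw: "(lin s w)^2 = V^2" using w by (auto simp: lin_minus lin_self F2 V_def)
  define q where "q = (\<lambda>(t, w'). ereal ((fobj s (u + t *\<^sub>R w') - fobj s u - t * (0 \<bullet> w')) / (t^2 / 2)))"
  have qlow: "- ((lin s w')^2) \<le> (fobj s (u + t *\<^sub>R w') - fobj s u - t * (0 \<bullet> w')) / (t^2 / 2)"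
    if "t > 0" for t w'
  proof -
    have "V^2 - (t * lin s w')^2 \<le> 2 * fobj s (u + t *\<^sub>R w')"
      using fobj_lower[of s "u + t *\<^sub>R w'"] by (simp add: lin_lin F2 V_def)
    hence "- ((lin s w')^2) * (t^2 / 2) \<le> fobj s (u + t *\<^sub>R w') - fobj s u - t * (0 \<bullet> w')"
      using fu by (simp add: power_mult_distrib algebra_simps)
    moreover have "t^2 / 2 > 0" using that by simp
    ultimately show ?thesis by (simp add: pos_le_divide_eq)
  qed
  have qval: "(fobj s (u + t *\<^sub>R w) - fobj s u - t * (0 \<bullet> w)) / (t^2 / 2) = - (V^2)"
    if "0 < t" "t \<le> 1" for t
  proof -
    have b: "\<bar>(u + t *\<^sub>R w)$i\<bar> \<le> \<bar>s$i\<bar>" for i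
      using w convex_abs[OF F1[of i], of t] that by auto
    have "2 * fobj s (u + t *\<^sub>R w) = V^2 - (t * lin s w)^2"
      using fobj_eq[of "u + t *\<^sub>R w" s, OF b] by (simp add: lin_lin F2 V_def)
    hence "fobj s (u + t *\<^sub>R w) - fobj s u - t * (0 \<bullet> w) = - (V^2) * (t^2 / 2)"
      using fu lw by (simp add: power_mult_distrib algebra_simps)
    moreover have "t^2 / 2 > 0" using that by simp
    ultimately show ?thesis by simp
  qed
  have lo: "ereal (- (V^2)) \<le> Liminf (at_right 0 \<times>\<^sub>F nhds w) q"
    unfolding le_Liminf_iff
  proof (intro allI impI)
    fix y assume y: "y < ereal (- (V^2))"
    obtain r where r: "y \<le> ereal r" "r < - (V^2)"
    proof (cases y)
      case (real r0) thus ?thesis using that y by auto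
    next
      case PInf thus ?thesis using y by simp
    next
      case MInf thus ?thesis using that[of "- (V^2) - 1"] by simp
    qed
    have tl: "((\<lambda>w'. - ((lin s w')^2)) \<longlongrightarrow> - ((lin s w)^2)) (nhds w)"
      unfolding lin_def by (intro tendsto_intros filterlim_ident)
    have ev1: "eventually (\<lambda>w'. r < - ((lin s w')^2)) (nhds w)"
      using order_tendstoD(1)[OF tl] r lw by simp
    have ev0: "eventually (\<lambda>t. 0 < t) (at_right (0::real))" by (simp add: eventually_at_right_less)
    show "eventually (\<lambda>x. y < q x) (at_right 0 \<times>\<^sub>F nhds w)"
      using eventually_prodI[OF ev0 ev1]
    proof (rule eventually_mono)
      fix p :: "real \<times> (real^'n)"
      assume a: "0 < fst p \<and> r < - (lin s (snd p))\<^sup>2"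
      obtain t w' where p: "p = (t, w')" by (cases p)
      have "ereal r < ereal (- ((lin s w')^2))" using a p by simp
      also have "\<dots> \<le> q p" unfolding q_def p using qlow[of t w'] a p by simp
      finally show "y < q p" using r(1) by simp
    qed
  qed
  have up: "Liminf (at_right 0 \<times>\<^sub>F nhds w) q \<le> ereal (- (V^2))"
  proof (rule Liminf_least)
    fix P assume "eventually P (at_right (0::real) \<times>\<^sub>F nhds w)"
    then obtain Pf Pg where P: "eventually Pf (at_right (0::real))" "eventually Pg (nhds w)"
      "\<forall>x y. Pf x \<longrightarrow> Pg y \<longrightarrow> P (x, y)" unfolding eventually_prod_filter by blast
    obtain b where b: "b > 0" "\<forall>y>0. y < b \<longrightarrow> Pf y" using P(1) unfolding eventually_at_right_field by auto
    define t where "t = min (b/2) 1"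
    have t: "0 < t" "t < b" "t \<le> 1" using b(1) unfolding t_def by auto
    have "P (t, w)" using P(3) b(2) t eventually_nhds_x_imp_x[OF P(2)] by blast
    hence "(INF x\<in>Collect P. q x) \<le> q (t, w)" by (intro INF_lower) simp
    also have "q (t, w) = ereal (- (V^2))" unfolding q_def using qval[OF t(1) t(3)] by simp
    finally show "(INF x\<in>Collect P. q x) \<le> ereal (- (V^2))" .
  qed
  show ?thesis unfolding second_subderiv_def using lo up q_def V_def by (simp add: antisym)
qed

theorem theorem2:
  fixes ustar u w :: "real^'n"
  assumes "ustar \<noteq> 0"
    and "spurious_stationary ustar u"
    and "w = ustar - u \<or> w = - ustar - u"
  shows "second_subderiv (fobj ustar) u 0 w = ereal (- ((vl1 ustar)^2))
         \<and> - ((vl1 ustar)^2) < (0::real)"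
proof -
  obtain Z where Z: "transpose Z = Z" "\<forall>i j. Z$i$j \<in> Sign ((outer u u - outer ustar ustar)$i$j)"
      "Z *v u = 0" and ne: "u \<noteq> ustar" "u \<noteq> - ustar"
    using assms(2) unfolding spurious_stationary_def stationary_def subdiff_def by auto
  have Zsym: "Z$i$j = Z$j$i" for i j
  proof -
    have "(transpose Z)$i$j = Z$j$i" by (simp add: transpose_def)
    thus ?thesis using Z(1) by simp
  qed
  have Zp: "\<bar>Z$i$j\<bar> \<le> 1 \<and> Z$i$j * (u$i * u$j - ustar$i * ustar$j) = \<bar>u$i * u$j - ustar$i * ustar$j\<bar>" for i j
    using sign_prop[OF Z(2)[rule_format, of i j]] by (simp add: outer_def)
  have Zu: "(\<Sum>j\<in>UNIV. Z$i$j * u$j) = 0" for i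
  proof -
    have "(Z *v u)$i = 0" using Z(3) by simp
    thus ?thesis by (simp add: matrix_vector_mult_def)
  qed
  have ns1: "\<exists>i. u$i \<noteq> ustar$i" using ne(1) by (simp add: vec_eq_iff)
  have ns2: "\<exists>i. u$i \<noteq> - ustar$i" using ne(2) by (simp add: vec_eq_iff)
  have F: "(\<Sum>i\<in>UNIV. sgn (ustar$i) * u$i) = 0 \<and> (\<forall>i. \<bar>u$i\<bar> \<le> \<bar>ustar$i\<bar>)"
    by (rule orig[of "\<lambda>i j. Z$i$j" "\<lambda>i. u$i" "\<lambda>i. ustar$i"]) (use Zsym Zp Zu ns1 ns2 in auto)
  have "second_subderiv (fobj ustar) u 0 w = ereal (- ((vl1 ustar)^2))"
    by (rule d2) (use F assms(3) in \<open>auto simp: lin_def\<close>)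
  moreover have "vl1 ustar > 0"
  proof -
    obtain i where i: "ustar$i \<noteq> 0" using assms(1) by (auto simp: vec_eq_iff)
    have "\<bar>ustar$i\<bar> \<le> vl1 ustar" unfolding vl1_def by (intro member_le_sum) auto
    thus ?thesis using i by simp
  qed
  ultimately show ?thesis by simp
qed

end
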